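(* Let $\phi_1,\dots,\phi_m:\{0,1\}^{\mathbb Z^d}\to\{0,1\}$ be non-constant local monotone maps and suppose there is a linear polar function $\mathcal L:\mathbb R^d\to\mathbb R^\sigma$ of dimension $\sigma\ge2$ with $\sum_{s=1}^\sigma\inf_{1\le k\le m}\varepsilon_{\phi_k}(\mathcal L_s)>0$. Then there exist a linear polar function $\mathcal L':\mathbb R^d\to\mathbb R^{\sigma'}$ of dimension $\sigma'\ge2$ and a vector $v\in\mathbb R^d$ such that $\varepsilon^v_{\phi_k}(\mathcal L'_s)>0$ for all $1\le s\le\sigma'$ and $1\le k\le m$.
   Context: A map $\phi:\{0,1\}^{\mathbb Z^d}\to\{0,1\}$ is local if it depends on finitely many coordinates and monotone if $x\le y$ implies $\phi(x)\le\phi(y)$. A minimal one-set of $\phi$ is a finite $A\subset\mathbb Z^d$ with $\phi(1_A)=1$ such that no proper subset has this property; $\mathcal A(\phi)$ is the set of minimal one-sets. A linear polar function of dimension $\sigma$ is a linear map $\mathcal L:\mathbb R^d\to\mathbb R^\sigma$ with $\sum_{s=1}^\sigma\mathcal L_s(z)=0$ for all $z$. For a linear form $\ell$ and $v\in\mathbb R^d$, the edge speed is $\varepsilon_\phi(\ell):=\sup_{A\in\mathcal A(\phi)}\inf_{i\in A}\ell(i)$ and the compensated edge speed is $\varepsilon^v_\phi(\ell):=\sup_{A\in\mathcal A(\phi)}\inf_{i\in A}\ell(i-v)$. *)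

theory Defs
  imports "HOL-Analysis.Analysis"
begin

text \<open>Configurations in {0,1}^(Z^d) are modelled as functions int^'d => bool
  (True = 1). A map phi : {0,1}^(Z^d) -> {0,1} is a predicate on configurations.\<close>

type_synonym 'd config = "int^'d \<Rightarrow> bool"

definition local_map :: "('d::finite config \<Rightarrow> bool) \<Rightarrow> bool" where
  "local_map \<phi> \<longleftrightarrow> (\<exists>U. finite U \<and> (\<forall>x y. (\<forall>i\<in>U. x i = y i) \<longrightarrow> \<phi> x = \<phi> y))"

definition monotone_map :: "('d::finite config \<Rightarrow> bool) \<Rightarrow> bool" where
  "monotone_map \<phi> \<longleftrightarrow> (\<forall>x y. x \<le> y \<longrightarrow> \<phi> x \<le> \<phi> y)"

definition nonconstant_map :: "('d::finite config \<Rightarrow> bool) \<Rightarrow> bool" where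
  "nonconstant_map \<phi> \<longleftrightarrow> (\<exists>x y. \<phi> x \<noteq> \<phi> y)"

definition indic :: "(int^'d) set \<Rightarrow> 'd config" where
  "indic A = (\<lambda>i. i \<in> A)"

definition min_one_sets :: "('d::finite config \<Rightarrow> bool) \<Rightarrow> (int^'d) set set" where
  "min_one_sets \<phi> = {A. finite A \<and> \<phi> (indic A) \<and> (\<forall>B. B \<subset> A \<longrightarrow> \<not> \<phi> (indic B))}"

definition vec_of_int :: "int^'d \<Rightarrow> real^'d" where
  "vec_of_int i = (\<chi> j. real_of_int (i $ j))"

definition linear_polar :: "nat \<Rightarrow> (nat \<Rightarrow> real^'d::finite \<Rightarrow> real) \<Rightarrow> bool" where
  "linear_polar \<sigma> L \<longleftrightarrow> (\<forall>s<\<sigma>. linear (L s)) \<and> (\<forall>z. (\<Sum>s<\<sigma>. L s z) = 0)"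

definition edge_speed :: "('d::finite config \<Rightarrow> bool) \<Rightarrow> (real^'d \<Rightarrow> real) \<Rightarrow> real" where
  "edge_speed \<phi> l = (SUP A\<in>min_one_sets \<phi>. INF i\<in>A. l (vec_of_int i))"

definition comp_edge_speed :: "real^'d \<Rightarrow> ('d::finite config \<Rightarrow> bool) \<Rightarrow> (real^'d \<Rightarrow> real) \<Rightarrow> real" where
  "comp_edge_speed v \<phi> l = (SUP A\<in>min_one_sets \<phi>. INF i\<in>A. l (vec_of_int i - v))"

end

theory Submission
  imports Defs
begin


lemma lin_rep:
  fixes f :: "'a::euclidean_space \<Rightarrow> real"
  assumes "linear f"
  shows "f x = (\<Sum>j\<in>Basis. f j *\<^sub>R j) \<bullet> x"
proof -
  have "f x = f (\<Sum>j\<in>Basis. (x \<bullet> j) *\<^sub>R j)" by (simp add: euclidean_representation)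
  also have "\<dots> = (\<Sum>j\<in>Basis. (x \<bullet> j) * f j)"
    using assms by (simp add: linear_sum linear_scale)
  also have "\<dots> = (\<Sum>j\<in>Basis. (f j *\<^sub>R j) \<bullet> x)"
    by (simp add: inner_commute mult.commute)
  also have "\<dots> = (\<Sum>j\<in>Basis. f j *\<^sub>R j) \<bullet> x"
    by (simp add: inner_sum_left)
  finally show ?thesis .
qed

lemma motzkin:
  fixes f :: "nat \<Rightarrow> 'a::euclidean_space \<Rightarrow> real" and b :: "nat \<Rightarrow> real"
  assumes n: "n > 0" and lin: "\<forall>s<n. linear (f s)"
    and nf: "\<not>(\<exists>v. \<forall>s<n. f s v < b s)"
  shows "\<exists>\<mu>. (\<forall>s<n. \<mu> s \<ge> 0) \<and> (\<Sum>s<n. \<mu> s) = 1 \<and> (\<forall>z. (\<Sum>s<n. \<mu> s * f s z) = 0)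
             \<and> (\<Sum>s<n. \<mu> s * b s) \<le> 0"
proof -
  define a where "a s = (\<Sum>j\<in>Basis. f s j *\<^sub>R j)" for s
  have fa: "f s z = a s \<bullet> z" if "s<n" for s z
    using lin that lin_rep unfolding a_def by blast
  define q where "q s = (a s, b s)" for s
  define Q where "Q = q ` {..<n}"
  define R where "R = ({0::'a} \<times> {..(0::real)})"
  have finQ: "finite Q" unfolding Q_def by simp
  have "convex hull Q \<inter> R \<noteq> {}"
  proof
    assume dis: "convex hull Q \<inter> R = {}"
    have "Q \<noteq> {}" using n unfolding Q_def by auto
    hence ne: "convex hull Q \<noteq> {}" by simp
    have cR: "convex R" unfolding R_def by (intro convex_Times) auto
    have clR: "closed R" unfolding R_def by (intro closed_Times) auto
    obtain w c where sep: "\<forall>x\<in>convex hull Q. w \<bullet> x < c" "\<forall>x\<in>R. w \<bullet> x > c"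
      using separating_hyperplane_compact_closed[OF convex_convex_hull
          finite_imp_compact_convex_hull[OF finQ] ne cR clR dis] by blast
    obtain w1 r where w: "w = (w1, r)" by (cases w)
    have c0: "c < 0"
    proof -
      have "(0::'a, 0::real) \<in> R" unfolding R_def by simp
      hence "c < w \<bullet> (0::'a, 0::real)" using sep(2) by blast
      thus ?thesis unfolding w by simp
    qed
    have rt: "r * t > c" if "t \<le> 0" for t
    proof -
      have "(0::'a, t) \<in> R" unfolding R_def using that by simp
      hence "c < w \<bullet> (0::'a, t)" using sep(2) by blast
      thus ?thesis unfolding w by simp
    qed
    have r0: "r \<le> 0"
    proof (rule ccontr)
      assume "\<not> r \<le> 0"
      hence "r > 0" by simp
      have "c / r \<le> 0" using c0 \<open>r>0\<close> by (simp add: divide_neg_pos less_imp_le)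
      from rt[OF this] \<open>r>0\<close> show False by simp
    qed
    have qs: "w1 \<bullet> a s + r * b s < c" if "s<n" for s
    proof -
      have "q s \<in> convex hull Q" using that unfolding Q_def by (auto intro: hull_inc)
      thus ?thesis using sep(1) unfolding w q_def by auto
    qed
    show False
    proof (cases "r = 0")
      case True
      define B where "B = (\<Sum>s<n. \<bar>b s\<bar>) + 1"
      have Bb: "- B < b s" if "s<n" for s
      proof -
        have "\<bar>b s\<bar> \<le> (\<Sum>s<n. \<bar>b s\<bar>)"
          using that by (intro member_le_sum) auto
        thus ?thesis unfolding B_def by linarith
      qed
      have B0: "B > 0" unfolding B_def by (smt (verit) sum_nonneg abs_ge_zero)
      define v where "v = (B / (- c)) *\<^sub>R w1"
      have "\<forall>s<n. f s v < b s"
      proof (intro allI impI)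
        fix s assume s: "s<n"
        have lt: "w1 \<bullet> a s < c" using qs[OF s] True by simp
        have "f s v = (B / (- c)) * (w1 \<bullet> a s)" using fa[OF s] unfolding v_def
          by (simp add: inner_commute)
        also have "\<dots> < (B / (- c)) * c"
          using lt B0 c0 by (intro mult_strict_left_mono) (auto simp: divide_pos_neg)
        also have "\<dots> = - B" using c0 by simp
        finally show "f s v < b s" using Bb[OF s] by simp
      qed
      thus False using nf by blast
    next
      case False
      hence rn: "r < 0" using r0 by simp
      define v where "v = (1 / (- r)) *\<^sub>R w1"
      have "\<forall>s<n. f s v < b s"
      proof (intro allI impI)
        fix s assume s: "s<n"
        have lt: "w1 \<bullet> a s < c - r * b s" using qs[OF s] by simp
        have "f s v = (w1 \<bullet> a s) / (- r)" using fa[OF s] unfolding v_def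
          by (simp add: inner_commute)
        also have "\<dots> < (c - r * b s) / (- r)"
          using lt rn by (intro divide_strict_right_mono) auto
        also have "\<dots> = c / (- r) + b s" using rn by (simp add: field_simps)
        also have "\<dots> < b s" using c0 rn by (simp add: divide_neg_neg)
        finally show "f s v < b s" .
      qed
      thus False using nf by blast
    qed
  qed
  then obtain t where t: "(0, t) \<in> convex hull Q" "t \<le> 0" unfolding R_def by auto
  then obtain u where u: "\<forall>x\<in>Q. 0 \<le> u x" "sum u Q = 1" "(\<Sum>x\<in>Q. u x *\<^sub>R x) = (0, t)"
    unfolding convex_hull_finite[OF finQ] by auto
  define F where "F y = {s\<in>{..<n}. q s = y}" for y
  define \<mu> where "\<mu> s = u (q s) / card (F (q s))" for s
  have key: "(\<Sum>s<n. \<mu> s * g (q s)) = (\<Sum>x\<in>Q. u x * g x)" for g :: "'a \<times> real \<Rightarrow> real"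
  proof -
    have "(\<Sum>s<n. \<mu> s * g (q s)) = (\<Sum>y\<in>Q. \<Sum>s\<in>F y. \<mu> s * g (q s))"
      unfolding Q_def F_def by (rule sum.image_gen) simp
    also have "\<dots> = (\<Sum>y\<in>Q. u y * g y)"
    proof (rule sum.cong[OF refl])
      fix y assume y: "y \<in> Q"
      have fin: "finite (F y)" unfolding F_def by simp
      have nz: "F y \<noteq> {}" using y unfolding F_def Q_def by auto
      have "(\<Sum>s\<in>F y. \<mu> s * g (q s)) = (\<Sum>s\<in>F y. u y / card (F y) * g y)"
        by (rule sum.cong) (auto simp: \<mu>_def F_def)
      also have "\<dots> = u y * g y" using fin nz by simp
      finally show "(\<Sum>s\<in>F y. \<mu> s * g (q s)) = u y * g y" .
    qed
    finally show ?thesis .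
  qed
  show ?thesis
  proof (intro exI conjI allI impI)
    fix s assume "s<n"
    show "\<mu> s \<ge> 0" unfolding \<mu>_def using u(1) \<open>s<n\<close> unfolding Q_def by auto
  next
    show "(\<Sum>s<n. \<mu> s) = 1" using key[of "\<lambda>_. 1"] u(2) by simp
  next
    fix z
    have "(\<Sum>s<n. \<mu> s * f s z) = (\<Sum>s<n. \<mu> s * (fst (q s) \<bullet> z))"
      by (rule sum.cong) (auto simp: fa q_def)
    also have "\<dots> = (\<Sum>x\<in>Q. u x * (fst x \<bullet> z))" by (rule key)
    also have "\<dots> = fst (\<Sum>x\<in>Q. u x *\<^sub>R x) \<bullet> z"
      by (simp add: fst_sum inner_sum_left)
    also have "\<dots> = 0" using u(3) by simp
    finally show "(\<Sum>s<n. \<mu> s * f s z) = 0" .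
  next
    have "(\<Sum>s<n. \<mu> s * b s) = (\<Sum>s<n. \<mu> s * snd (q s))" by (simp add: q_def)
    also have "\<dots> = (\<Sum>x\<in>Q. u x * snd x)" by (rule key)
    also have "\<dots> = snd (\<Sum>x\<in>Q. u x *\<^sub>R x)" by (simp add: snd_sum)
    also have "\<dots> = t" using u(3) by simp
    finally show "(\<Sum>s<n. \<mu> s * b s) \<le> 0" using t(2) by simp
  qed
qed



lemma lin_scale: "linear (f :: 'a::real_vector \<Rightarrow> real) \<Longrightarrow> linear (\<lambda>z. c * f z)"
  unfolding linear_iff by (simp add: linear_add linear_scale algebra_simps)

lemma INF_mono_comm:
  fixes g :: "real \<Rightarrow> real" and f :: "'b \<Rightarrow> real"
  assumes "mono g" "finite A" "A \<noteq> {}"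
  shows "(INF i\<in>A. g (f i)) = g (INF i\<in>A. f i)"
proof -
  have "(INF i\<in>A. g (f i)) = Min (g ` f ` A)"
    using assms by (simp add: cInf_eq_Min image_image)
  also have "\<dots> = g (Min (f ` A))" using assms by (simp add: mono_Min_commute)
  also have "\<dots> = g (INF i\<in>A. f i)" using assms by (simp add: cInf_eq_Min)
  finally show ?thesis .
qed

lemma SUP_mono_comm:
  fixes g :: "real \<Rightarrow> real" and f :: "'b \<Rightarrow> real"
  assumes "mono g" "finite A" "A \<noteq> {}"
  shows "(SUP i\<in>A. g (f i)) = g (SUP i\<in>A. f i)"
proof -
  have "(SUP i\<in>A. g (f i)) = Max (g ` f ` A)"
    using assms by (simp add: cSup_eq_Max image_image)
  also have "\<dots> = g (Max (f ` A))" using assms by (simp add: mono_Max_commute)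
  also have "\<dots> = g (SUP i\<in>A. f i)" using assms by (simp add: cSup_eq_Max)
  finally show ?thesis .
qed

lemma mono_shift: "mono (\<lambda>x::real. x - c)" by (simp add: mono_def)
lemma mono_scale: "(c::real) \<ge> 0 \<Longrightarrow> mono (\<lambda>x. c * x)" by (simp add: mono_def mult_left_mono)

definition good :: "('d::finite config \<Rightarrow> bool) \<Rightarrow> bool" where
  "good \<phi> \<longleftrightarrow> finite (min_one_sets \<phi>) \<and> min_one_sets \<phi> \<noteq> {} \<and>
     (\<forall>A\<in>min_one_sets \<phi>. finite A \<and> A \<noteq> {})"

lemma good_intro:
  assumes "nonconstant_map \<phi>" "local_map \<phi>" "monotone_map \<phi>"
  shows "good \<phi>"
proof -
  obtain U where U: "finite U" "\<And>x y. (\<forall>i\<in>U. x i = y i) \<Longrightarrow> \<phi> x = \<phi> y"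
    using assms(2) unfolding local_map_def by blast
  have sub: "A \<subseteq> U" if A: "A \<in> min_one_sets \<phi>" for A
  proof (rule ccontr)
    assume "\<not> A \<subseteq> U"
    hence ps: "A \<inter> U \<subset> A" by blast
    have "\<phi> (indic (A \<inter> U)) = \<phi> (indic A)" by (rule U(2)) (simp add: indic_def)
    thus False using A ps unfolding min_one_sets_def by auto
  qed
  have fin: "finite (min_one_sets \<phi>)"
    proof (rule finite_subset)
    show "min_one_sets \<phi> \<subseteq> Pow U" using sub by blast
    show "finite (Pow U)" using U(1) by simp
  qed
  have nonemp: "A \<noteq> {}" if "A \<in> min_one_sets \<phi>" for A
  proof
    assume "A = {}"
    hence e: "\<phi> (indic {})" using that unfolding min_one_sets_def by auto
    have "\<phi> y" for y
    proof -
      have "indic {} \<le> y" by (simp add: indic_def le_fun_def)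
      hence "\<phi> (indic {}) \<le> \<phi> y" using assms(3) unfolding monotone_map_def by blast
      thus ?thesis using e by simp
    qed
    thus False using assms(1) unfolding nonconstant_map_def by auto
  qed
  obtain x where x: "\<phi> x" using assms(1) unfolding nonconstant_map_def by (metis (full_types))
  define F where "F = U \<inter> {i. x i}"
  have "\<phi> (indic F) = \<phi> x" by (rule U(2)) (simp add: indic_def F_def)
  hence F: "\<phi> (indic F)" "finite F" using x U(1) unfolding F_def by auto
  define P where "P n \<longleftrightarrow> (\<exists>A\<subseteq>F. card A = n \<and> \<phi> (indic A))" for n
  have "P (card F)" unfolding P_def using F by blast
  hence "P (LEAST n. P n)" by (rule LeastI)
  then obtain A where A: "A \<subseteq> F" "card A = (LEAST n. P n)" "\<phi> (indic A)" unfolding P_def by blast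
  have "A \<in> min_one_sets \<phi>"
    unfolding min_one_sets_def
  proof (intro CollectI conjI allI impI)
    show "finite A" using A(1) F(2) finite_subset by blast
    show "\<phi> (indic A)" by fact
    fix B assume B: "B \<subset> A"
    hence "card B < card A" using \<open>finite A\<close> psubset_card_mono by blast
    hence "\<not> P (card B)" using A(2) not_less_Least by metis
    thus "\<not> \<phi> (indic B)" unfolding P_def using B A(1) by blast
  qed
  hence ne: "min_one_sets \<phi> \<noteq> {}" by blast
  have "\<forall>A\<in>min_one_sets \<phi>. finite A \<and> A \<noteq> {}"
    using nonemp finite_subset[OF sub U(1)] by blast
  thus ?thesis unfolding good_def using fin ne by blast
qed

lemma comp_edge:
  assumes "good \<phi>" "linear l"
  shows "comp_edge_speed v \<phi> l = edge_speed \<phi> l - l v"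
proof -
  have "comp_edge_speed v \<phi> l = (SUP A\<in>min_one_sets \<phi>. (INF i\<in>A. l (vec_of_int i)) - l v)"
    unfolding comp_edge_speed_def
  proof (rule SUP_cong[OF refl])
    fix A assume "A \<in> min_one_sets \<phi>"
    hence "finite A" "A \<noteq> {}" using assms(1) unfolding good_def by auto
    have "(INF i\<in>A. l (vec_of_int i - v)) = (INF i\<in>A. l (vec_of_int i) - l v)"
      using assms(2) by (simp add: linear_diff)
    also have "\<dots> = (INF i\<in>A. l (vec_of_int i)) - l v"
      using INF_mono_comm[OF mono_shift \<open>finite A\<close> \<open>A \<noteq> {}\<close>] .
    finally show "(INF i\<in>A. l (vec_of_int i - v)) = (INF i\<in>A. l (vec_of_int i)) - l v" .
  qed
  also have "\<dots> = edge_speed \<phi> l - l v" unfolding edge_speed_def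
    using SUP_mono_comm[where g="\<lambda>x. x - l v" and f="\<lambda>A. INF i\<in>A. l (vec_of_int i)"
        and A="min_one_sets \<phi>", OF mono_shift] assms(1) unfolding good_def by simp
  finally show ?thesis .
qed

lemma edge_scale:
  assumes "good \<phi>" "(c::real) \<ge> 0"
  shows "edge_speed \<phi> (\<lambda>z. c * l z) = c * edge_speed \<phi> l"
proof -
  have "edge_speed \<phi> (\<lambda>z. c * l z) = (SUP A\<in>min_one_sets \<phi>. c * (INF i\<in>A. l (vec_of_int i)))"
    unfolding edge_speed_def
  proof (rule SUP_cong[OF refl])
    fix A assume "A \<in> min_one_sets \<phi>"
    hence "finite A" "A \<noteq> {}" using assms(1) unfolding good_def by auto
    thus "(INF i\<in>A. c * l (vec_of_int i)) = c * (INF i\<in>A. l (vec_of_int i))"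
      using INF_mono_comm[where g="\<lambda>x. c * x" and f="\<lambda>i. l (vec_of_int i)"
        and A=A, OF mono_scale[OF assms(2)]] by simp
  qed
  also have "\<dots> = c * edge_speed \<phi> l" unfolding edge_speed_def
    using SUP_mono_comm[where g="\<lambda>x. c * x" and f="\<lambda>A. INF i\<in>A. l (vec_of_int i)"
        and A="min_one_sets \<phi>", OF mono_scale[OF assms(2)]] assms(1) unfolding good_def by simp
  finally show ?thesis .
qed

lemma edge_zero:
  assumes "good \<phi>"
  shows "edge_speed \<phi> (\<lambda>z. 0) = 0"
proof -
  have "edge_speed \<phi> (\<lambda>z. 0) = (SUP A\<in>min_one_sets \<phi>. (0::real))"
    unfolding edge_speed_def
    by (rule SUP_cong[OF refl]) (use assms in \<open>auto simp: good_def\<close>)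
  also have "\<dots> = 0" using assms unfolding good_def by simp
  finally show ?thesis .
qed



lemma main_ind:
  fixes \<phi> :: "nat \<Rightarrow> 'd::finite config \<Rightarrow> bool" and m :: nat
  assumes m: "m \<ge> 1" and G: "\<forall>k<m. good (\<phi> k)"
  shows "\<sigma> \<ge> 2 \<Longrightarrow> linear_polar \<sigma> L \<Longrightarrow> (\<Sum>s<\<sigma>. INF k\<in>{..<m}. edge_speed (\<phi> k) (L s)) > 0 \<Longrightarrow>
    \<exists>\<sigma>' (L' :: nat \<Rightarrow> real^'d \<Rightarrow> real) (v :: real^'d).
           \<sigma>' \<ge> 2 \<and> linear_polar \<sigma>' L' \<and>
           (\<forall>s<\<sigma>'. \<forall>k<m. comp_edge_speed v (\<phi> k) (L' s) > 0)"
proof (induction \<sigma> arbitrary: L rule: less_induct)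
  case (less \<sigma> L)
  define b where "b s = (INF k\<in>{..<m}. edge_speed (\<phi> k) (L s))" for s
  have finM: "finite {..<m}" "{..<m} \<noteq> {}" using m lessThan_empty_iff by auto
  have lin: "\<forall>s<\<sigma>. linear (L s)" and sum0: "\<And>z. (\<Sum>s<\<sigma>. L s z) = 0"
    using less.prems(2) unfolding linear_polar_def by auto
  have bpos: "(\<Sum>s<\<sigma>. b s) > 0" using less.prems(3) unfolding b_def .
  show ?case
  proof (cases "\<exists>v. \<forall>s<\<sigma>. L s v < b s")
    case True
    then obtain v where v: "\<forall>s<\<sigma>. L s v < b s" by blast
    show ?thesis
    proof (intro exI conjI allI impI)
      show "2 \<le> \<sigma>" "linear_polar \<sigma> L" using less.prems by auto
      fix s k assume s: "s<\<sigma>" and k: "k<m"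
      have "b s \<le> edge_speed (\<phi> k) (L s)" unfolding b_def
        using k finM by (intro cINF_lower) auto
      thus "comp_edge_speed v (\<phi> k) (L s) > 0"
        using comp_edge[of "\<phi> k" "L s" v] G k lin s v by auto
    qed
  next
    case False
    obtain \<mu> where mu: "\<forall>s<\<sigma>. \<mu> s \<ge> 0" "(\<Sum>s<\<sigma>. \<mu> s) = 1"
      "\<forall>z. (\<Sum>s<\<sigma>. \<mu> s * L s z) = 0" "(\<Sum>s<\<sigma>. \<mu> s * b s) \<le> 0"
      using motzkin[of \<sigma> L b] False lin less.prems(1) by auto
    define M where "M = Max (\<mu> ` {..<\<sigma>})"
    have ne: "{..<\<sigma>} \<noteq> {}" using less.prems(1) lessThan_empty_iff by auto
    have Mge: "\<mu> s \<le> M" if "s<\<sigma>" for s unfolding M_def using that by auto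
    obtain s0 where s0: "s0 < \<sigma>" "\<mu> s0 = M"
    proof -
      have "M \<in> \<mu> ` {..<\<sigma>}" unfolding M_def using ne by (intro Max_in) auto
      thus ?thesis using that by auto
    qed
    have Mpos: "M > 0"
    proof (rule ccontr)
      assume "\<not> M > 0"
      hence "(\<Sum>s<\<sigma>. \<mu> s) \<le> (\<Sum>s<\<sigma>. 0)" using Mge by (intro sum_mono) force
      thus False using mu(2) by simp
    qed
    define c where "c s = M - \<mu> s" for s
    define S where "S = {s\<in>{..<\<sigma>}. \<mu> s < M}"
    have finS: "finite S" unfolding S_def by simp
    have S_sub: "S \<subseteq> {..<\<sigma>}" unfolding S_def by auto
    have cz: "\<forall>s\<in>{..<\<sigma>} - S. c s = 0" unfolding S_def c_def using Mge by force
    have sumS: "(\<Sum>s\<in>S. g s) = (\<Sum>s<\<sigma>. g s)" if "\<forall>s\<in>{..<\<sigma>} - S. g s = 0" for g :: "nat \<Rightarrow> real"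
      by (rule sum.mono_neutral_left) (use that S_sub in auto)
    define \<sigma>' where "\<sigma>' = card S"
    have lt: "\<sigma>' < \<sigma>"
    proof -
      have "S \<subset> {..<\<sigma>}" using S_sub s0 unfolding S_def by auto
      thus ?thesis unfolding \<sigma>'_def by (metis card_lessThan finite_lessThan psubset_card_mono)
    qed
    obtain h where h: "bij_betw h {0..<\<sigma>'} S"
      using ex_bij_betw_nat_finite[OF finS] unfolding \<sigma>'_def by blast
    have hS: "h j \<in> S" if "j < \<sigma>'" for j using h that unfolding bij_betw_def by auto
    define L' where "L' j = (\<lambda>z. c (h j) * L (h j) z)" for j
    have sumh: "(\<Sum>j<\<sigma>'. g (h j)) = (\<Sum>s\<in>S. g s)" for g :: "nat \<Rightarrow> real"
      using sum.reindex_bij_betw[OF h, of g] by (simp add: atLeast0LessThan)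
    have lp: "linear_polar \<sigma>' L'"
      unfolding linear_polar_def
    proof (intro conjI allI impI)
      fix j assume "j < \<sigma>'"
      thus "linear (L' j)" unfolding L'_def using hS lin S_sub by (auto intro: lin_scale)
    next
      fix z
      have "(\<Sum>j<\<sigma>'. L' j z) = (\<Sum>s\<in>S. c s * L s z)" unfolding L'_def by (rule sumh)
      also have "\<dots> = (\<Sum>s<\<sigma>. c s * L s z)" by (rule sumS) (use cz in auto)
      also have "\<dots> = M * (\<Sum>s<\<sigma>. L s z) - (\<Sum>s<\<sigma>. \<mu> s * L s z)"
        unfolding c_def by (simp add: algebra_simps sum_subtractf sum_distrib_left)
      also have "\<dots> = 0" using sum0 mu(3) by simp
      finally show "(\<Sum>j<\<sigma>'. L' j z) = 0" .
    qed
    define b' where "b' j = (INF k\<in>{..<m}. edge_speed (\<phi> k) (L' j))" for j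
    have b'eq: "b' j = c (h j) * b (h j)" if "j < \<sigma>'" for j
    proof -
      have c0: "c (h j) \<ge> 0" unfolding c_def using Mge hS[OF that] S_sub by force
      have "b' j = (INF k\<in>{..<m}. c (h j) * edge_speed (\<phi> k) (L (h j)))"
        unfolding b'_def L'_def
        by (rule INF_cong[OF refl]) (use G c0 edge_scale in auto)
      also have "\<dots> = c (h j) * b (h j)" unfolding b_def
        by (rule INF_mono_comm[OF mono_scale[OF c0] finM])
      finally show ?thesis .
    qed
    have b'pos: "(\<Sum>j<\<sigma>'. b' j) > 0"
    proof -
      have "(\<Sum>j<\<sigma>'. b' j) = (\<Sum>j<\<sigma>'. c (h j) * b (h j))" by (rule sum.cong) (auto simp: b'eq)
      also have "\<dots> = (\<Sum>s\<in>S. c s * b s)" by (rule sumh)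
      also have "\<dots> = (\<Sum>s<\<sigma>. c s * b s)" by (rule sumS) (use cz in auto)
      also have "\<dots> = M * (\<Sum>s<\<sigma>. b s) - (\<Sum>s<\<sigma>. \<mu> s * b s)"
        unfolding c_def by (simp add: algebra_simps sum_subtractf sum_distrib_left)
      also have "\<dots> > 0" using Mpos bpos mu(4) by (smt (verit) mult_pos_pos)
      finally show ?thesis .
    qed
    have ge2: "\<sigma>' \<ge> 2"
    proof (rule ccontr)
      assume "\<not> \<sigma>' \<ge> 2"
      hence "\<sigma>' = 0 \<or> \<sigma>' = 1" by auto
      thus False
      proof
        assume "\<sigma>' = 0" thus False using b'pos by simp
      next
        assume one: "\<sigma>' = 1"
        have "L' 0 z = 0" for z using lp one unfolding linear_polar_def by auto
        hence "L' 0 = (\<lambda>z. 0)" by auto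
        hence L0: "L' 0 = (\<lambda>z. 0)" .
        have "b' 0 = (INF k\<in>{..<m}. (0::real))" unfolding b'_def
        proof (rule INF_cong[OF refl])
          fix k assume "k \<in> {..<m}"
          hence gk: "good (\<phi> k)" using G by simp
          show "edge_speed (\<phi> k) (L' 0) = 0" unfolding L0 by (rule edge_zero[OF gk])
        qed
        hence "b' 0 = 0" using finM(2) by simp
        thus False using b'pos one by simp
      qed
    qed
    have b'pos2: "(\<Sum>s<\<sigma>'. INF k\<in>{..<m}. edge_speed (\<phi> k) (L' s)) > 0"
      using b'pos unfolding b'_def .
    show ?thesis by (rule less.IH[OF lt ge2 lp b'pos2])
  qed
qed


theorem mainTheorem6:
  fixes \<phi> :: "nat \<Rightarrow> 'd::finite config \<Rightarrow> bool"
    and m \<sigma> :: nat and L :: "nat \<Rightarrow> real^'d \<Rightarrow> real"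
  assumes "m \<ge> 1"
    and "\<forall>k<m. nonconstant_map (\<phi> k) \<and> local_map (\<phi> k) \<and> monotone_map (\<phi> k)"
    and "\<sigma> \<ge> 2" and "linear_polar \<sigma> L"
    and "(\<Sum>s<\<sigma>. INF k\<in>{..<m}. edge_speed (\<phi> k) (L s)) > 0"
  shows "\<exists>\<sigma>' (L' :: nat \<Rightarrow> real^'d \<Rightarrow> real) (v :: real^'d).
           \<sigma>' \<ge> 2 \<and> linear_polar \<sigma>' L' \<and>
           (\<forall>s<\<sigma>'. \<forall>k<m. comp_edge_speed v (\<phi> k) (L' s) > 0)"
proof -
  have G: "\<forall>k<m. good (\<phi> k)"
  proof (intro allI impI)
    fix k assume "k < m"
    hence "nonconstant_map (\<phi> k)" "local_map (\<phi> k)" "monotone_map (\<phi> k)"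
      using assms(2) by auto
    thus "good (\<phi> k)" by (rule good_intro)
  qed
  show ?thesis by (rule main_ind[OF assms(1) G assms(3,4,5)])
qed

end
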